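(* Let $M_0>0$, $M>M_0$, let $r=r(M_0,M)>0$ be as in the local existence theorem, and let $(A,\tau)$ be the solution on $[0,r]$ of system (1.1) with initial distribution $(\varphi,\tau_0)\in\mathrm{Lip}_\alpha\times C_+(\Omega)$ satisfying $\|\varphi\|_{\mathrm{Lip}_\alpha}+\|\tau_0\|_\infty\le M_0$ (so that $\|A(t,\cdot)\|_\infty\le M$ on $[0,r]$). Then $A_t\in\mathrm{Lip}_\alpha$ for every $t\in[0,r]$, and there exists a constant $\widehat M>M$, depending only on $M_0$, $M$, $\alpha$ and the data $F,f$ (through the bound $\tau_{\max}$ on the delay), such that $\|A_t\|_{\mathrm{Lip}_\alpha}\le\widehat M$ for all $t\in[0,r]$.
   Context: $\Omega\subset\mathbb R^n$ compact, $C(\Omega)$ with sup norm, $\alpha\ge0$ fixed. Standing assumption: $F:C(\Omega)\times C(\Omega)\times C(\Omega^2)\to C(\Omega)$ is Lipschitz on bounded sets; $f:C(\Omega)\to C(\Omega)$ is Lipschitz, $0<f(\phi)(x)\le M_f$ for a constant $M_f$, non-increasing for the pointwise order. $\mathrm{Lip}_\alpha$: $\phi\in C((-\infty,0],C(\Omega))$ with $\theta\mapsto e^{-\alpha|\theta|}\phi(\theta)$ bounded and Lipschitz, norm = sup norm + Lipschitz seminorm of that map. $A_t(\theta):=A(t+\theta)$, $\theta\le0$. Local existence theorem: for $M>M_0>0$ there is $r(M_0,M)>0$ such that for every such initial distribution, (1.1) has a unique solution on $[0,r]$, namely continuous $A:(-\infty,r]\to C(\Omega)$, $\tau:[0,r]\to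 C_+(\Omega)$ with $A=\varphi$ on $(-\infty,0]$, $A(t,x)=\varphi(0,x)+\int_0^tF(A(l,\cdot),\tau(l,\cdot),A(l-\tau(l)))(x)dl$ (with $A(l-\tau(l))(x,y)=A(l-\tau(l,x),y)$) and $\int_{t-\tau(t,x)}^tf(A(s,\cdot))(x)ds=\int_{-\tau_0(x)}^0f(\varphi(s,\cdot))(x)ds$, and $\|A(t,\cdot)\|_\infty\le M$ on $[0,r]$. *)

theory Defs
  imports "HOL-Analysis.Analysis"
begin

text \<open>Elements of C(S) are represented by functions continuous on S; only their
values on S matter. Sup norm over S (0 for empty S).\<close>

definition supnorm :: "'b set \<Rightarrow> ('b \<Rightarrow> real) \<Rightarrow> real" where
  "supnorm S u = (if S = {} then 0 else (SUP x\<in>S. \<bar>u x\<bar>))"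

definition cfun :: "'b::topological_space set \<Rightarrow> ('b \<Rightarrow> real) set" where
  "cfun S = {u. continuous_on S u}"

definition cont_sup :: "'b::topological_space set \<Rightarrow> real set \<Rightarrow> (real \<Rightarrow> 'b \<Rightarrow> real) \<Rightarrow> bool" where
  "cont_sup S T A \<longleftrightarrow> (\<forall>t\<in>T. A t \<in> cfun S) \<and>
     (\<forall>t\<in>T. \<forall>\<epsilon>>0. \<exists>\<delta>>0. \<forall>s\<in>T. \<bar>s - t\<bar> < \<delta> \<longrightarrow> supnorm S (\<lambda>x. A s x - A t x) < \<epsilon>)"

definition wt :: "real \<Rightarrow> (real \<Rightarrow> 'b \<Rightarrow> real) \<Rightarrow> real \<Rightarrow> 'b \<Rightarrow> real" where
  "wt \<alpha> \<phi> \<theta> = (\<lambda>x. exp (- \<alpha> * \<bar>\<theta>\<bar>) * \<phi> \<theta> x)"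

definition in_Lip :: "'b::topological_space set \<Rightarrow> real \<Rightarrow> (real \<Rightarrow> 'b \<Rightarrow> real) \<Rightarrow> bool" where
  "in_Lip S \<alpha> \<phi> \<longleftrightarrow> cont_sup S {..0} \<phi> \<and>
     (\<exists>B. \<forall>\<theta>\<le>0. supnorm S (wt \<alpha> \<phi> \<theta>) \<le> B) \<and>
     (\<exists>L. \<forall>\<theta>\<le>0. \<forall>\<theta>'\<le>0.
        supnorm S (\<lambda>x. wt \<alpha> \<phi> \<theta> x - wt \<alpha> \<phi> \<theta>' x) \<le> L * \<bar>\<theta> - \<theta>'\<bar>)"

definition Lip_norm :: "'b set \<Rightarrow> real \<Rightarrow> (real \<Rightarrow> 'b \<Rightarrow> real) \<Rightarrow> real" where
  "Lip_norm S \<alpha> \<phi> =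
     (SUP \<theta>\<in>{..0}. supnorm S (wt \<alpha> \<phi> \<theta>)) +
     (SUP p\<in>{p::real\<times>real. fst p \<le> 0 \<and> snd p \<le> 0 \<and> fst p \<noteq> snd p}.
        supnorm S (\<lambda>x. wt \<alpha> \<phi> (fst p) x - wt \<alpha> \<phi> (snd p) x) / \<bar>fst p - snd p\<bar>)"

definition F_ok :: "'b::topological_space set \<Rightarrow>
   (('b \<Rightarrow> real) \<Rightarrow> ('b \<Rightarrow> real) \<Rightarrow> ('b \<times> 'b \<Rightarrow> real) \<Rightarrow> ('b \<Rightarrow> real)) \<Rightarrow> bool" where
  "F_ok \<Omega> F \<longleftrightarrow>
     (\<forall>u\<in>cfun \<Omega>. \<forall>v\<in>cfun \<Omega>. \<forall>w\<in>cfun (\<Omega> \<times> \<Omega>). F u v w \<in> cfun \<Omega>) \<and>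
     (\<forall>B. \<exists>L. \<forall>u\<in>cfun \<Omega>. \<forall>v\<in>cfun \<Omega>. \<forall>w\<in>cfun (\<Omega> \<times> \<Omega>).
                \<forall>u'\<in>cfun \<Omega>. \<forall>v'\<in>cfun \<Omega>. \<forall>w'\<in>cfun (\<Omega> \<times> \<Omega>).
        supnorm \<Omega> u \<le> B \<longrightarrow> supnorm \<Omega> v \<le> B \<longrightarrow> supnorm (\<Omega> \<times> \<Omega>) w \<le> B \<longrightarrow>
        supnorm \<Omega> u' \<le> B \<longrightarrow> supnorm \<Omega> v' \<le> B \<longrightarrow> supnorm (\<Omega> \<times> \<Omega>) w' \<le> B \<longrightarrow>
        supnorm \<Omega> (\<lambda>x. F u v w x - F u' v' w' x)
          \<le> L * (supnorm \<Omega> (\<lambda>x. u x - u' x) + supnorm \<Omega> (\<lambda>x. v x - v' x)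
                 + supnorm (\<Omega> \<times> \<Omega>) (\<lambda>p. w p - w' p)))"

definition f_ok :: "'b::topological_space set \<Rightarrow> (('b \<Rightarrow> real) \<Rightarrow> ('b \<Rightarrow> real)) \<Rightarrow> real \<Rightarrow> bool" where
  "f_ok \<Omega> f Mf \<longleftrightarrow>
     (\<forall>u\<in>cfun \<Omega>. f u \<in> cfun \<Omega> \<and> (\<forall>x\<in>\<Omega>. 0 < f u x \<and> f u x \<le> Mf)) \<and>
     (\<exists>L. \<forall>u\<in>cfun \<Omega>. \<forall>v\<in>cfun \<Omega>.
        supnorm \<Omega> (\<lambda>x. f u x - f v x) \<le> L * supnorm \<Omega> (\<lambda>x. u x - v x)) \<and>
     (\<forall>u\<in>cfun \<Omega>. \<forall>v\<in>cfun \<Omega>. (\<forall>x\<in>\<Omega>. u x \<le> v x) \<longrightarrow> (\<forall>x\<in>\<Omega>. f v x \<le> f u x))"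

text \<open>(A, tau) is a solution of system (1.1) on [0,r] with initial distribution (phi, tau0).
  Here A(l - tau(l))(x,y) = A(l - tau(l,x), y).\<close>
definition is_solution :: "'b::topological_space set \<Rightarrow>
   (('b \<Rightarrow> real) \<Rightarrow> ('b \<Rightarrow> real) \<Rightarrow> ('b \<times> 'b \<Rightarrow> real) \<Rightarrow> ('b \<Rightarrow> real)) \<Rightarrow>
   (('b \<Rightarrow> real) \<Rightarrow> ('b \<Rightarrow> real)) \<Rightarrow>
   (real \<Rightarrow> 'b \<Rightarrow> real) \<Rightarrow> ('b \<Rightarrow> real) \<Rightarrow> real \<Rightarrow>
   (real \<Rightarrow> 'b \<Rightarrow> real) \<Rightarrow> (real \<Rightarrow> 'b \<Rightarrow> real) \<Rightarrow> bool" where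
  "is_solution \<Omega> F f \<phi> \<tau>0 r A \<tau> \<longleftrightarrow>
     cont_sup \<Omega> {..r} A \<and>
     cont_sup \<Omega> {0..r} \<tau> \<and> (\<forall>t\<in>{0..r}. \<forall>x\<in>\<Omega>. 0 \<le> \<tau> t x) \<and>
     (\<forall>\<theta>\<le>0. \<forall>x\<in>\<Omega>. A \<theta> x = \<phi> \<theta> x) \<and>
     (\<forall>t\<in>{0..r}. \<forall>x\<in>\<Omega>.
        ((\<lambda>l. F (A l) (\<tau> l) (\<lambda>p. A (l - \<tau> l (fst p)) (snd p)) x)
           has_integral (A t x - \<phi> 0 x)) {0..t}) \<and>
     (\<forall>t\<in>{0..r}. \<forall>x\<in>\<Omega>.
        (\<lambda>s. f (A s) x) integrable_on {t - \<tau> t x..t} \<and>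
        (\<lambda>s. f (\<phi> s) x) integrable_on {- \<tau>0 x..0} \<and>
        integral {t - \<tau> t x..t} (\<lambda>s. f (A s) x) = integral {- \<tau>0 x..0} (\<lambda>s. f (\<phi> s) x))"

end

theory Submission
  imports Defs
begin


lemma supnorm_ge:
  fixes S :: "'b::metric_space set"
  assumes "compact S" "continuous_on S u" "x \<in> S"
  shows "\<bar>u x\<bar> \<le> supnorm S u"
proof -
  have "compact (u ` S)" using assms compact_continuous_image by blast
  then have "bounded (u ` S)" by (rule compact_imp_bounded)
  then obtain B where B: "\<forall>y\<in>S. \<bar>u y\<bar> \<le> B"
    by (auto simp: bounded_iff)
  have "bdd_above ((\<lambda>y. \<bar>u y\<bar>) ` S)" using B by (auto intro: bdd_aboveI2)
  then show ?thesis using assms(3) unfolding supnorm_def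
    by (auto intro: cSUP_upper)
qed

lemma supnorm_le:
  assumes "\<And>x. x \<in> S \<Longrightarrow> \<bar>u x\<bar> \<le> B" "0 \<le> B"
  shows "supnorm S u \<le> B"
  using assms unfolding supnorm_def by (auto intro: cSUP_least)

lemma supnorm_nonneg:
  fixes S :: "'b::metric_space set"
  assumes "compact S" "continuous_on S u"
  shows "0 \<le> supnorm S u"
proof (cases "S = {}")
  case True then show ?thesis by (simp add: supnorm_def)
next
  case False then obtain x where "x \<in> S" by auto
  then show ?thesis using supnorm_ge[OF assms \<open>x\<in>S\<close>] by linarith
qed

lemma exp_lip:
  fixes a b :: real
  assumes "a \<le> 0" "b \<le> 0"
  shows "\<bar>exp a - exp b\<bar> \<le> \<bar>a - b\<bar>"
proof -
  have *: "exp x - exp y \<le> x - y" if "y \<le> x" "x \<le> 0" for x y :: real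
  proof -
    have "exp x - exp y = exp x * (1 - exp (y - x))" by (simp add: algebra_simps exp_diff)
    also have "\<dots> \<le> 1 * (1 - exp (y - x))"
      using that by (intro mult_right_mono) auto
    also have "\<dots> \<le> x - y" using exp_ge_add_one_self[of "y - x"] unfolding mult_1 by linarith
    finally show ?thesis .
  qed
  show ?thesis
  proof (cases "b \<le> a")
    case True then show ?thesis using *[of b a] assms by auto
  next
    case False then show ?thesis using *[of a b] assms by auto
  qed
qed

lemma lip_glue:
  fixes h :: "real \<Rightarrow> real"
  assumes "c \<le> 0"
    and l1: "\<And>x y. x \<le> c \<Longrightarrow> y \<le> c \<Longrightarrow> \<bar>h x - h y\<bar> \<le> L * \<bar>x - y\<bar>"
    and l2: "\<And>x y. c \<le> x \<Longrightarrow> x \<le> 0 \<Longrightarrow> c \<le> y \<Longrightarrow> y \<le> 0 \<Longrightarrow> \<bar>h x - h y\<bar> \<le> L * \<bar>x - y\<bar>"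
    and "x \<le> 0" "y \<le> 0"
  shows "\<bar>h x - h y\<bar> \<le> L * \<bar>x - y\<bar>"
proof -
  have mix: "\<bar>h a - h b\<bar> \<le> L * \<bar>a - b\<bar>" if "a \<le> c" "c \<le> b" "b \<le> 0" for a b
  proof -
    have "\<bar>h a - h b\<bar> \<le> \<bar>h a - h c\<bar> + \<bar>h c - h b\<bar>" by linarith
    also have "\<dots> \<le> L * \<bar>a - c\<bar> + L * \<bar>c - b\<bar>"
      using l1[of a c] l2[of c b] that assms(1) by auto
    also have "\<dots> = L * \<bar>a - b\<bar>" using that by (simp add: algebra_simps)
    finally show ?thesis .
  qed
  show ?thesis
  proof (cases "x \<le> c")
    case True
    show ?thesis
    proof (cases "y \<le> c")
      case True then show ?thesis using l1 \<open>x \<le> c\<close> by auto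
    next
      case False then show ?thesis using mix[of x y] \<open>x \<le> c\<close> assms by auto
    qed
  next
    case False
    show ?thesis
    proof (cases "y \<le> c")
      case True then show ?thesis using mix[of y x] False assms by (auto simp: abs_minus_commute)
    next
      case F2: False then show ?thesis using l2 False assms by auto
    qed
  qed
qed

lemma cont_comp2:
  fixes S :: "'b::metric_space set"
  assumes cs: "cont_sup S {..r} A" and cpt: "compact S"
    and g: "continuous_on S g" and gr: "\<And>x. x \<in> S \<Longrightarrow> g x \<le> r"
  shows "continuous_on (S \<times> S) (\<lambda>p. A (g (fst p)) (snd p))"
  unfolding continuous_on_iff
proof (intro ballI allI impI)
  fix p0 :: "'b \<times> 'b" and e :: real
  assume p0: "p0 \<in> S \<times> S" and e: "0 < e"
  obtain x0 y0 where p0e: "p0 = (x0, y0)" "x0 \<in> S" "y0 \<in> S" using p0 by auto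
  define s0 where "s0 = g x0"
  have s0r: "s0 \<in> {..r}" using gr p0e s0_def by auto
  obtain d1 where d1: "d1 > 0" "\<forall>s\<in>{..r}. \<bar>s - s0\<bar> < d1 \<longrightarrow> supnorm S (\<lambda>x. A s x - A s0 x) < e/2"
    using cs s0r e unfolding cont_sup_def by (meson half_gt_zero)
  obtain d2 where d2: "d2 > 0" "\<forall>x\<in>S. dist x x0 < d2 \<longrightarrow> dist (g x) (g x0) < d1"
    using g p0e d1(1) unfolding continuous_on_iff by blast
  have As0: "continuous_on S (A s0)" using cs s0r unfolding cont_sup_def cfun_def by auto
  obtain d3 where d3: "d3 > 0" "\<forall>y\<in>S. dist y y0 < d3 \<longrightarrow> dist (A s0 y) (A s0 y0) < e/2"
    using As0 p0e e unfolding continuous_on_iff by (meson half_gt_zero)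
  show "\<exists>d>0. \<forall>p\<in>S \<times> S. dist p p0 < d \<longrightarrow> dist (A (g (fst p)) (snd p)) (A (g (fst p0)) (snd p0)) < e"
  proof (intro exI[of _ "min d2 d3"] conjI ballI impI)
    show "0 < min d2 d3" using d2 d3 by auto
    fix p assume p: "p \<in> S \<times> S" "dist p p0 < min d2 d3"
    obtain x y where pe: "p = (x, y)" "x \<in> S" "y \<in> S" using p by auto
    have "dist x x0 < d2" using dist_fst_le[of p p0] p pe p0e by auto
    then have "\<bar>g x - s0\<bar> < d1" using d2 pe s0_def by (auto simp: dist_real_def)
    then have "supnorm S (\<lambda>z. A (g x) z - A s0 z) < e/2" using d1 gr pe by auto
    moreover have "\<bar>A (g x) y - A s0 y\<bar> \<le> supnorm S (\<lambda>z. A (g x) z - A s0 z)"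
    proof (rule supnorm_ge[OF cpt _ pe(3)])
      have "continuous_on S (A (g x))" using cs gr pe unfolding cont_sup_def cfun_def by auto
      then show "continuous_on S (\<lambda>z. A (g x) z - A s0 z)" using As0 by (intro continuous_intros)
    qed
    moreover have "dist y y0 < d3" using dist_snd_le[of p p0] p pe p0e by auto
    then have "\<bar>A s0 y - A s0 y0\<bar> < e/2" using d3 pe by (auto simp: dist_real_def)
    ultimately show "dist (A (g (fst p)) (snd p)) (A (g (fst p0)) (snd p0)) < e"
      using pe p0e s0_def by (simp add: dist_real_def) (smt (verit))
  qed
qed



lemma phi_facts:
  fixes \<Omega> :: "'a::euclidean_space set"
  assumes cpt: "compact \<Omega>" and L: "in_Lip \<Omega> \<alpha> \<phi>"
    and tc: "continuous_on \<Omega> \<tau>0"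
    and N: "Lip_norm \<Omega> \<alpha> \<phi> + supnorm \<Omega> \<tau>0 \<le> M0"
  shows "\<forall>s\<le>0. \<forall>y\<in>\<Omega>. \<bar>exp (- \<alpha> * \<bar>s\<bar>) * \<phi> s y\<bar> \<le> M0"
    and "\<forall>s\<le>0. \<forall>s'\<le>0. \<forall>y\<in>\<Omega>. \<bar>exp (- \<alpha> * \<bar>s\<bar>) * \<phi> s y - exp (- \<alpha> * \<bar>s'\<bar>) * \<phi> s' y\<bar> \<le> M0 * \<bar>s - s'\<bar>"
    and "\<forall>x\<in>\<Omega>. \<tau>0 x \<le> M0"
proof -
  define P where "P = {p::real\<times>real. fst p \<le> 0 \<and> snd p \<le> 0 \<and> fst p \<noteq> snd p}"
  define Q where "Q = (\<lambda>p. supnorm \<Omega> (\<lambda>x. wt \<alpha> \<phi> (fst p) x - wt \<alpha> \<phi> (snd p) x) / \<bar>fst p - snd p\<bar>)"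
  define S1 where "S1 = (SUP \<theta>\<in>{..0}. supnorm \<Omega> (wt \<alpha> \<phi> \<theta>))"
  define S2 where "S2 = (SUP p\<in>P. Q p)"
  have LN: "Lip_norm \<Omega> \<alpha> \<phi> = S1 + S2" unfolding Lip_norm_def S1_def S2_def P_def Q_def by simp
  have pc: "continuous_on \<Omega> (\<phi> s)" if "s \<le> 0" for s
    using L that unfolding in_Lip_def cont_sup_def cfun_def by auto
  have wc: "continuous_on \<Omega> (wt \<alpha> \<phi> s)" if "s \<le> 0" for s
    unfolding wt_def using pc[OF that] by (intro continuous_intros)
  obtain B where B: "\<forall>\<theta>\<le>0. supnorm \<Omega> (wt \<alpha> \<phi> \<theta>) \<le> B" using L unfolding in_Lip_def by auto
  obtain LL where LL: "\<forall>\<theta>\<le>0. \<forall>\<theta>'\<le>0. supnorm \<Omega> (\<lambda>x. wt \<alpha> \<phi> \<theta> x - wt \<alpha> \<phi> \<theta>' x) \<le> LL * \<bar>\<theta> - \<theta>'\<bar>"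
    using L unfolding in_Lip_def by auto
  have bd1: "bdd_above ((\<lambda>\<theta>. supnorm \<Omega> (wt \<alpha> \<phi> \<theta>)) ` {..0})" using B by (auto intro: bdd_aboveI2)
  have Qle: "Q p \<le> LL" if "p \<in> P" for p
  proof -
    have "\<bar>fst p - snd p\<bar> > 0" using that P_def by auto
    then show ?thesis unfolding Q_def using LL that P_def by (auto simp: divide_le_eq)
  qed
  have bd2: "bdd_above (Q ` P)" by (rule bdd_aboveI2[where M=LL]) (rule Qle)
  have u1: "supnorm \<Omega> (wt \<alpha> \<phi> \<theta>) \<le> S1" if "\<theta> \<le> 0" for \<theta>
    unfolding S1_def using bd1 that by (auto intro: cSUP_upper)
  have u2: "Q p \<le> S2" if "p \<in> P" for p
    unfolding S2_def using bd2 that by (auto intro: cSUP_upper)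
  have n1: "0 \<le> S1" using u1[of 0] supnorm_nonneg[OF cpt wc[of 0]] by auto
  have p01: "(0, -1) \<in> P" unfolding P_def by auto
  have "0 \<le> Q (0,-1)" unfolding Q_def
    using supnorm_nonneg[OF cpt, of "\<lambda>x. wt \<alpha> \<phi> 0 x - wt \<alpha> \<phi> (-1) x"] wc[of 0] wc[of "-1"]
    by (auto intro: continuous_intros)
  then have n2: "0 \<le> S2" using u2[OF p01] by auto
  have n3: "0 \<le> supnorm \<Omega> \<tau>0" using supnorm_nonneg[OF cpt tc] .
  have S1le: "S1 \<le> M0" and S2le: "S2 \<le> M0" and T0le: "supnorm \<Omega> \<tau>0 \<le> M0"
    using N LN n1 n2 n3 by auto
  show "\<forall>s\<le>0. \<forall>y\<in>\<Omega>. \<bar>exp (- \<alpha> * \<bar>s\<bar>) * \<phi> s y\<bar> \<le> M0"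
  proof (intro allI impI ballI)
    fix s :: real and y assume "s \<le> 0" "y \<in> \<Omega>"
    then have "\<bar>wt \<alpha> \<phi> s y\<bar> \<le> supnorm \<Omega> (wt \<alpha> \<phi> s)" using supnorm_ge[OF cpt wc] by auto
    then show "\<bar>exp (- \<alpha> * \<bar>s\<bar>) * \<phi> s y\<bar> \<le> M0" using u1[OF \<open>s\<le>0\<close>] S1le by (simp add: wt_def)
  qed
  show "\<forall>s\<le>0. \<forall>s'\<le>0. \<forall>y\<in>\<Omega>. \<bar>exp (- \<alpha> * \<bar>s\<bar>) * \<phi> s y - exp (- \<alpha> * \<bar>s'\<bar>) * \<phi> s' y\<bar> \<le> M0 * \<bar>s - s'\<bar>"
  proof (intro allI impI ballI)
    fix s s' :: real and y assume ss: "s \<le> 0" "s' \<le> 0" "y \<in> \<Omega>"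
    show "\<bar>exp (- \<alpha> * \<bar>s\<bar>) * \<phi> s y - exp (- \<alpha> * \<bar>s'\<bar>) * \<phi> s' y\<bar> \<le> M0 * \<bar>s - s'\<bar>"
    proof (cases "s = s'")
      case True then show ?thesis by simp
    next
      case False
      then have pP: "(s, s') \<in> P" using ss P_def by auto
      have pos: "\<bar>s - s'\<bar> > 0" using False by auto
      have "\<bar>wt \<alpha> \<phi> s y - wt \<alpha> \<phi> s' y\<bar> \<le> supnorm \<Omega> (\<lambda>x. wt \<alpha> \<phi> s x - wt \<alpha> \<phi> s' x)"
        using supnorm_ge[OF cpt, of "\<lambda>x. wt \<alpha> \<phi> s x - wt \<alpha> \<phi> s' x" y] wc ss
        by (auto intro: continuous_intros)
      also have "\<dots> = Q (s, s') * \<bar>s - s'\<bar>" unfolding Q_def using pos by simp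
      also have "\<dots> \<le> M0 * \<bar>s - s'\<bar>" using u2[OF pP] S2le pos by (intro mult_right_mono) auto
      finally show ?thesis by (simp add: wt_def)
    qed
  qed
  show "\<forall>x\<in>\<Omega>. \<tau>0 x \<le> M0"
    using supnorm_ge[OF cpt tc] T0le by (metis abs_ge_self order_trans)
qed



lemma f_eq:
  fixes \<Omega> :: "'a::euclidean_space set"
  assumes cpt: "compact \<Omega>" and fok: "f_ok \<Omega> f Mf"
    and u: "continuous_on \<Omega> u" and v: "continuous_on \<Omega> v"
    and eq: "\<And>y. y \<in> \<Omega> \<Longrightarrow> u y = v y" and x: "x \<in> \<Omega>"
  shows "f u x = f v x"
proof -
  obtain L where L: "\<forall>u\<in>cfun \<Omega>. \<forall>v\<in>cfun \<Omega>.
        supnorm \<Omega> (\<lambda>x. f u x - f v x) \<le> L * supnorm \<Omega> (\<lambda>x. u x - v x)"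
    using fok unfolding f_ok_def by blast
  have fc: "continuous_on \<Omega> (f w)" if "continuous_on \<Omega> w" for w
    using fok that unfolding f_ok_def cfun_def by auto
  have "supnorm \<Omega> (\<lambda>x. u x - v x) \<le> 0" by (rule supnorm_le) (use eq in auto)
  moreover have "supnorm \<Omega> (\<lambda>x. u x - v x) \<ge> 0"
    by (rule supnorm_nonneg[OF cpt]) (intro continuous_intros u v)
  ultimately have "supnorm \<Omega> (\<lambda>x. u x - v x) = 0" by auto
  moreover have "supnorm \<Omega> (\<lambda>x. f u x - f v x) \<le> L * supnorm \<Omega> (\<lambda>x. u x - v x)"
    using L u v by (auto simp: cfun_def)
  ultimately have "supnorm \<Omega> (\<lambda>x. f u x - f v x) \<le> 0" by simp
  moreover have "\<bar>f u x - f v x\<bar> \<le> supnorm \<Omega> (\<lambda>x. f u x - f v x)"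
    by (rule supnorm_ge[OF cpt _ x]) (intro continuous_intros fc u v)
  ultimately show ?thesis by auto
qed

lemma tau_bound:
  fixes \<Omega> :: "'a::euclidean_space set"
  assumes cpt: "compact \<Omega>" and fok: "f_ok \<Omega> f Mf"
    and L: "in_Lip \<Omega> \<alpha> \<phi>" and t0: "\<forall>x\<in>\<Omega>. 0 \<le> \<tau>0 x"
    and sol: "is_solution \<Omega> F f \<phi> \<tau>0 r A \<tau>"
    and AM: "\<forall>t\<in>{0..r}. supnorm \<Omega> (A t) \<le> M"
    and t: "0 < t" "t \<le> r" and x: "x \<in> \<Omega>"
  shows "\<tau> t x \<le> t + \<tau>0 x"
proof (rule ccontr)
  assume "\<not> \<tau> t x \<le> t + \<tau>0 x"
  then have ab: "t - \<tau> t x < - \<tau>0 x" by auto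
  define a where "a = t - \<tau> t x"
  define b where "b = - \<tau>0 x"
  define g where "g = (\<lambda>s. f (A s) x)"
  define h where "h = (\<lambda>s. f (\<phi> s) x)"
  have Ac: "continuous_on \<Omega> (A s)" if "s \<le> r" for s
    using sol that unfolding is_solution_def cont_sup_def cfun_def by auto
  have pc: "continuous_on \<Omega> (\<phi> s)" if "s \<le> 0" for s
    using L that unfolding in_Lip_def cont_sup_def cfun_def by auto
  have Aphi: "A s y = \<phi> s y" if "s \<le> 0" "y \<in> \<Omega>" for s y
    using sol that unfolding is_solution_def by auto
  have tr: "t \<in> {0..r}" using t by auto
  have ig: "g integrable_on {a..t}" and eqi: "integral {a..t} g = integral {b..0} h"
    using sol tr x unfolding is_solution_def a_def b_def g_def h_def by auto
  have b0: "b \<le> 0" using t0 x b_def by auto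
  have alb: "a < b" using ab a_def b_def by auto
  have gpos: "0 \<le> g s" if "s \<le> r" for s
    using fok Ac[OF that] x unfolding f_ok_def cfun_def g_def by (auto intro: less_imp_le)
  define c where "c = f (\<lambda>_. M) x"
  have cpos: "0 < c" using fok x unfolding f_ok_def cfun_def c_def by auto
  have gc: "c \<le> g s" if "s \<in> {0..t}" for s
  proof -
    have "A s y \<le> M" if "y \<in> \<Omega>" for y
      using supnorm_ge[OF cpt Ac that] AM \<open>s \<in> {0..t}\<close> t by (smt (verit) atLeastAtMost_iff)
    then show ?thesis using fok Ac[of s] x \<open>s \<in> {0..t}\<close> t
      unfolding f_ok_def cfun_def c_def g_def by auto
  qed
  have i1: "integral {a..0} g + integral {0..t} g = integral {a..t} g"
    by (rule Henstock_Kurzweil_Integration.integral_combine) (use alb b0 t ig in auto)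
  have ia0: "g integrable_on {a..0}"
    by (rule integrable_subinterval_real[OF ig]) (use t in auto)
  have i2: "integral {a..b} g + integral {b..0} g = integral {a..0} g"
    by (rule Henstock_Kurzweil_Integration.integral_combine) (use alb b0 ia0 in auto)
  have i3: "integral {b..0} g = integral {b..0} h"
    unfolding g_def h_def
    by (rule Henstock_Kurzweil_Integration.integral_cong, rule f_eq[OF cpt fok Ac pc _ x])
      (use t b0 Aphi in auto)
  have i4: "0 \<le> integral {a..b} g"
    by (rule Henstock_Kurzweil_Integration.integral_nonneg)
      (use integrable_subinterval_real[OF ig, of a b] alb b0 t gpos in auto)
  have i0t: "g integrable_on {0..t}"
    by (rule integrable_subinterval_real[OF ig]) (use t alb b0 in auto)
  have "integral {0..t} (\<lambda>_. c) \<le> integral {0..t} g"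
    by (rule integral_le) (use i0t gc in auto)
  then have i5: "t * c \<le> integral {0..t} g" using t by simp
  have "0 < t * c" using t cpos by simp
  then show False using i1 i2 i3 i4 i5 eqi by linarith
qed



lemma tau_bound_all:
  fixes \<Omega> :: "'a::euclidean_space set"
  assumes cpt: "compact \<Omega>" and fok: "f_ok \<Omega> f Mf"
    and L: "in_Lip \<Omega> \<alpha> \<phi>" and t0: "\<forall>x\<in>\<Omega>. 0 \<le> \<tau>0 x"
    and sol: "is_solution \<Omega> F f \<phi> \<tau>0 r A \<tau>"
    and AM: "\<forall>t\<in>{0..r}. supnorm \<Omega> (A t) \<le> M"
    and r: "0 < r"
  shows "\<forall>t\<in>{0..r}. \<forall>x\<in>\<Omega>. \<tau> t x \<le> t + \<tau>0 x"
proof (intro ballI)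
  fix t x assume t: "t \<in> {0..r}" and x: "x \<in> \<Omega>"
  show "\<tau> t x \<le> t + \<tau>0 x"
  proof (cases "t = 0")
    case False
    then show ?thesis using tau_bound[OF cpt fok L t0 sol AM _ _ x] t by auto
  next
    case True
    have cs: "cont_sup \<Omega> {0..r} \<tau>" using sol unfolding is_solution_def by auto
    have Tc: "continuous_on \<Omega> (\<tau> s)" if "s \<in> {0..r}" for s
      using cs that unfolding cont_sup_def cfun_def by auto
    show ?thesis
    proof (rule ccontr)
      assume "\<not> \<tau> t x \<le> t + \<tau>0 x"
      then have gt: "\<tau> 0 x > \<tau>0 x" using True by auto
      define e where "e = (\<tau> 0 x - \<tau>0 x) / 2"
      have e: "e > 0" using gt e_def by auto
      obtain d where d: "d > 0" "\<forall>s\<in>{0..r}. \<bar>s - 0\<bar> < d \<longrightarrow> supnorm \<Omega> (\<lambda>y. \<tau> s y - \<tau> 0 y) < e"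
        using cs e r unfolding cont_sup_def by (meson atLeastAtMost_iff order_refl less_imp_le)
      define t1 where "t1 = min r (min (d/2) (e/2))"
      have t1: "0 < t1" "t1 \<le> r" "t1 < d" "t1 \<le> e/2" using r d e t1_def by auto
      have "supnorm \<Omega> (\<lambda>y. \<tau> t1 y - \<tau> 0 y) < e" using d t1 by auto
      moreover have "\<bar>\<tau> t1 x - \<tau> 0 x\<bar> \<le> supnorm \<Omega> (\<lambda>y. \<tau> t1 y - \<tau> 0 y)"
        by (rule supnorm_ge[OF cpt _ x]) (use Tc t1 r in \<open>auto intro!: continuous_intros\<close>)
      moreover have "\<tau> t1 x \<le> t1 + \<tau>0 x"
        using tau_bound[OF cpt fok L t0 sol AM t1(1) t1(2) x] .
      ultimately have "\<tau> 0 x < t1 + \<tau>0 x + e" by linarith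
      then show False using t1 e_def e by (simp add: field_simps)
    qed
  qed
qed



lemma F_bound:
  fixes \<Omega> :: "'a::euclidean_space set"
    and F :: "('a \<Rightarrow> real) \<Rightarrow> ('a \<Rightarrow> real) \<Rightarrow> ('a \<times> 'a \<Rightarrow> real) \<Rightarrow> ('a \<Rightarrow> real)"
  assumes cpt: "compact \<Omega>" and al: "\<alpha> \<ge> 0"
    and Fc: "\<forall>u\<in>cfun \<Omega>. \<forall>v\<in>cfun \<Omega>. \<forall>w\<in>cfun (\<Omega> \<times> \<Omega>). F u v w \<in> cfun \<Omega>"
    and LB: "\<forall>u\<in>cfun \<Omega>. \<forall>v\<in>cfun \<Omega>. \<forall>w\<in>cfun (\<Omega> \<times> \<Omega>).
                \<forall>u'\<in>cfun \<Omega>. \<forall>v'\<in>cfun \<Omega>. \<forall>w'\<in>cfun (\<Omega> \<times> \<Omega>).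
        supnorm \<Omega> u \<le> B \<longrightarrow> supnorm \<Omega> v \<le> B \<longrightarrow> supnorm (\<Omega> \<times> \<Omega>) w \<le> B \<longrightarrow>
        supnorm \<Omega> u' \<le> B \<longrightarrow> supnorm \<Omega> v' \<le> B \<longrightarrow> supnorm (\<Omega> \<times> \<Omega>) w' \<le> B \<longrightarrow>
        supnorm \<Omega> (\<lambda>x. F u v w x - F u' v' w' x)
          \<le> LL * (supnorm \<Omega> (\<lambda>x. u x - u' x) + supnorm \<Omega> (\<lambda>x. v x - v' x)
                 + supnorm (\<Omega> \<times> \<Omega>) (\<lambda>p. w p - w' p))"
    and B: "B = M + r + M0 + M0 * exp (\<alpha> * (r + M0))"
    and M0: "0 < M0" and MM: "M0 < M" and r: "0 < r"
    and sol: "is_solution \<Omega> F f \<phi> \<tau>0 r A \<tau>"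
    and AM: "\<forall>t\<in>{0..r}. supnorm \<Omega> (A t) \<le> M"
    and phibd: "\<forall>s\<le>0. \<forall>y\<in>\<Omega>. \<bar>exp (- \<alpha> * \<bar>s\<bar>) * \<phi> s y\<bar> \<le> M0"
    and taub: "\<forall>t\<in>{0..r}. \<forall>x\<in>\<Omega>. \<tau> t x \<le> t + \<tau>0 x"
    and t0M: "\<forall>x\<in>\<Omega>. \<tau>0 x \<le> M0"
    and l: "l \<in> {0..r}" and x: "x \<in> \<Omega>"
  shows "\<bar>F (A l) (\<tau> l) (\<lambda>p. A (l - \<tau> l (fst p)) (snd p)) x\<bar>
           \<le> supnorm \<Omega> (F (\<lambda>_. 0) (\<lambda>_. 0) (\<lambda>_. 0)) + \<bar>LL\<bar> * (3 * B)"
proof -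
  have csA: "cont_sup \<Omega> {..r} A" and csT: "cont_sup \<Omega> {0..r} \<tau>"
    and Tnn: "\<forall>t\<in>{0..r}. \<forall>x\<in>\<Omega>. 0 \<le> \<tau> t x"
    and Aphi: "\<forall>\<theta>\<le>0. \<forall>x\<in>\<Omega>. A \<theta> x = \<phi> \<theta> x"
    using sol unfolding is_solution_def by blast+
  have Ac: "continuous_on \<Omega> (A s)" if "s \<le> r" for s
    using csA that unfolding cont_sup_def cfun_def by auto
  have Tc: "continuous_on \<Omega> (\<tau> l)" using csT l unfolding cont_sup_def cfun_def by auto
  define w where "w = (\<lambda>p. A (l - \<tau> l (fst p)) (snd p))"
  have wc: "continuous_on (\<Omega> \<times> \<Omega>) w" unfolding w_def
  proof (rule cont_comp2[OF csA cpt])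
    show "continuous_on \<Omega> (\<lambda>x. l - \<tau> l x)" using Tc by (intro continuous_intros)
    fix y assume "y \<in> \<Omega>"
    then have "0 \<le> \<tau> l y" using Tnn l by blast
    then show "l - \<tau> l y \<le> r" using l by simp
  qed
  have B0: "0 \<le> B" using B M0 MM r by (simp add: add_nonneg_nonneg)
  have "0 \<le> \<alpha> * (r + M0)" using al M0 r by simp
  then have e1: "exp (\<alpha> * (r + M0)) \<ge> 1" by simp
  have pe0: "0 \<le> M0 * exp (\<alpha> * (r + M0))" using M0 by simp
  have "supnorm \<Omega> (A l) \<le> M" using AM l by blast
  then have uB: "supnorm \<Omega> (A l) \<le> B" using B M0 r pe0 by linarith
  have vB: "supnorm \<Omega> (\<tau> l) \<le> B"
  proof (rule supnorm_le[OF _ B0])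
    fix y assume y: "y \<in> \<Omega>"
    have "\<tau> l y \<le> l + \<tau>0 y" using taub l y by blast
    moreover have "\<tau>0 y \<le> M0" using t0M y by blast
    ultimately have "\<tau> l y \<le> r + M0" using l by simp
    moreover have "0 \<le> \<tau> l y" using Tnn l y by blast
    ultimately show "\<bar>\<tau> l y\<bar> \<le> B" using B pe0 MM M0 by linarith
  qed
  have wB: "supnorm (\<Omega> \<times> \<Omega>) w \<le> B"
  proof (rule supnorm_le[OF _ B0])
    fix p assume p: "p \<in> \<Omega> \<times> \<Omega>"
    obtain y z where pe: "p = (y, z)" "y \<in> \<Omega>" "z \<in> \<Omega>" using p by auto
    define s where "s = l - \<tau> l y"
    have q1: "0 \<le> \<tau> l y" using Tnn l pe by blast
    have q2: "\<tau> l y \<le> l + \<tau>0 y" using taub l pe by blast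
    have q3: "\<tau>0 y \<le> M0" using t0M pe by blast
    have sr: "s \<le> r" "s \<ge> - M0" using s_def q1 q2 q3 l by auto
    have "\<bar>A s z\<bar> \<le> M + M0 * exp (\<alpha> * (r + M0))"
    proof (cases "s \<ge> 0")
      case True
      have "s \<in> {0..r}" using True sr by simp
      then have "supnorm \<Omega> (A s) \<le> M" using AM by blast
      then have "\<bar>A s z\<bar> \<le> M" using supnorm_ge[OF cpt Ac[OF sr(1)] pe(3)] by linarith
      then show ?thesis using pe0 by linarith
    next
      case False
      then have eq: "A s z = \<phi> s z" using Aphi pe by auto
      have h: "\<bar>exp (- \<alpha> * \<bar>s\<bar>) * \<phi> s z\<bar> \<le> M0" using phibd False pe by auto
      have "\<bar>\<phi> s z\<bar> = exp (\<alpha> * \<bar>s\<bar>) * \<bar>exp (- \<alpha> * \<bar>s\<bar>) * \<phi> s z\<bar>"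
        by (simp add: abs_mult exp_minus field_simps)
      also have "\<dots> \<le> exp (\<alpha> * \<bar>s\<bar>) * M0" using h by simp
      also have "\<dots> \<le> exp (\<alpha> * (r + M0)) * M0"
      proof (rule mult_right_mono)
        have "\<bar>s\<bar> \<le> r + M0" using sr False r by auto
        then have "\<alpha> * \<bar>s\<bar> \<le> \<alpha> * (r + M0)" using al by (rule mult_left_mono)
        then show "exp (\<alpha> * \<bar>s\<bar>) \<le> exp (\<alpha> * (r + M0))" by simp
      qed (use M0 in simp)
      finally show ?thesis using eq MM M0 by (simp add: mult.commute)
    qed
    moreover have "w p = A s z" using pe w_def s_def by simp
    ultimately show "\<bar>w p\<bar> \<le> B" using B r M0 by simp
  qed
  define z1 :: "'a \<Rightarrow> real" where "z1 = (\<lambda>_. 0)"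
  define z2 :: "'a \<times> 'a \<Rightarrow> real" where "z2 = (\<lambda>_. 0)"
  have z1c: "z1 \<in> cfun \<Omega>" and z2c: "z2 \<in> cfun (\<Omega> \<times> \<Omega>)" unfolding z1_def z2_def cfun_def by auto
  have z1B: "supnorm \<Omega> z1 \<le> B" and z2B: "supnorm (\<Omega> \<times> \<Omega>) z2 \<le> B"
    unfolding z1_def z2_def using B0 by (auto intro!: supnorm_le)
  have uc: "A l \<in> cfun \<Omega>" using Ac l unfolding cfun_def by auto
  have vc: "\<tau> l \<in> cfun \<Omega>" using Tc unfolding cfun_def by auto
  have wc': "w \<in> cfun (\<Omega> \<times> \<Omega>)" using wc unfolding cfun_def by auto
  have main: "supnorm \<Omega> (\<lambda>x. F (A l) (\<tau> l) w x - F z1 z1 z2 x)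
          \<le> LL * (supnorm \<Omega> (\<lambda>x. A l x - z1 x) + supnorm \<Omega> (\<lambda>x. \<tau> l x - z1 x)
                 + supnorm (\<Omega> \<times> \<Omega>) (\<lambda>p. w p - z2 p))"
    by (rule LB[rule_format, OF uc vc wc' z1c z1c z2c uB vB wB z1B z1B z2B])
  have s1: "supnorm \<Omega> (\<lambda>x. A l x - z1 x) = supnorm \<Omega> (A l)"
    and s2: "supnorm \<Omega> (\<lambda>x. \<tau> l x - z1 x) = supnorm \<Omega> (\<tau> l)"
    and s3: "supnorm (\<Omega> \<times> \<Omega>) (\<lambda>p. w p - z2 p) = supnorm (\<Omega> \<times> \<Omega>) w"
    unfolding z1_def z2_def by simp_all
  have n1: "0 \<le> supnorm \<Omega> (A l)" using supnorm_nonneg[OF cpt Ac] l by auto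
  have n2: "0 \<le> supnorm \<Omega> (\<tau> l)" using supnorm_nonneg[OF cpt Tc] .
  have n3: "0 \<le> supnorm (\<Omega> \<times> \<Omega>) w" using supnorm_nonneg[OF compact_Times[OF cpt cpt] wc] .
  have sum3: "supnorm \<Omega> (A l) + supnorm \<Omega> (\<tau> l) + supnorm (\<Omega> \<times> \<Omega>) w \<le> 3 * B"
    using uB vB wB by linarith
  have "LL * (supnorm \<Omega> (A l) + supnorm \<Omega> (\<tau> l) + supnorm (\<Omega> \<times> \<Omega>) w)
        \<le> \<bar>LL\<bar> * (supnorm \<Omega> (A l) + supnorm \<Omega> (\<tau> l) + supnorm (\<Omega> \<times> \<Omega>) w)"
    using n1 n2 n3 by (intro mult_right_mono) auto
  also have "\<dots> \<le> \<bar>LL\<bar> * (3 * B)" using sum3 by (intro mult_left_mono) auto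
  finally have m2: "supnorm \<Omega> (\<lambda>x. F (A l) (\<tau> l) w x - F z1 z1 z2 x) \<le> \<bar>LL\<bar> * (3 * B)"
    using main[unfolded s1 s2 s3] by linarith
  have Fc1: "continuous_on \<Omega> (F (A l) (\<tau> l) w)" using Fc uc vc wc' unfolding cfun_def by auto
  have Fc0: "continuous_on \<Omega> (F z1 z1 z2)" using Fc z1c z2c unfolding cfun_def by auto
  have "\<bar>F (A l) (\<tau> l) w x - F z1 z1 z2 x\<bar> \<le> supnorm \<Omega> (\<lambda>x. F (A l) (\<tau> l) w x - F z1 z1 z2 x)"
    by (rule supnorm_ge[OF cpt _ x]) (intro continuous_intros Fc1 Fc0)
  moreover have "\<bar>F z1 z1 z2 x\<bar> \<le> supnorm \<Omega> (F z1 z1 z2)" by (rule supnorm_ge[OF cpt Fc0 x])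
  ultimately show ?thesis using m2 unfolding w_def z1_def z2_def by linarith
qed



lemma A_lip:
  fixes \<Omega> :: "'a::euclidean_space set"
  assumes sol: "is_solution \<Omega> F f \<phi> \<tau>0 r A \<tau>"
    and Fbd: "\<forall>l\<in>{0..r}. \<forall>x\<in>\<Omega>. \<bar>F (A l) (\<tau> l) (\<lambda>p. A (l - \<tau> l (fst p)) (snd p)) x\<bar> \<le> K"
    and s: "s \<in> {0..r}" and t: "t \<in> {0..r}" and x: "x \<in> \<Omega>"
  shows "\<bar>A t x - A s x\<bar> \<le> K * \<bar>t - s\<bar>"
proof -
  define G where "G = (\<lambda>l. F (A l) (\<tau> l) (\<lambda>p. A (l - \<tau> l (fst p)) (snd p)) x)"
  have hi: "(G has_integral (A u x - \<phi> 0 x)) {0..u}" if "u \<in> {0..r}" for u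
    using sol that x unfolding is_solution_def G_def by blast
  have one: "\<bar>A b x - A a x\<bar> \<le> K * (b - a)" if ab: "a \<le> b" "a \<in> {0..r}" "b \<in> {0..r}" for a b
  proof -
    have ib: "G integrable_on {0..b}" using hi[OF ab(3)] by blast
    have "integral {0..a} G + integral {a..b} G = integral {0..b} G"
      by (rule Henstock_Kurzweil_Integration.integral_combine) (use ab ib in auto)
    moreover have "integral {0..a} G = A a x - \<phi> 0 x" using hi[OF ab(2)] by (rule integral_unique)
    moreover have "integral {0..b} G = A b x - \<phi> 0 x" using hi[OF ab(3)] by (rule integral_unique)
    ultimately have eq: "integral {a..b} G = A b x - A a x" by linarith
    have iab: "G integrable_on {a..b}"
      by (rule integrable_subinterval_real[OF ib]) (use ab in auto)
    have Gb: "\<bar>G l\<bar> \<le> K" if "l \<in> {a..b}" for l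
      using Fbd x that ab unfolding G_def by auto
    have "integral {a..b} G \<le> integral {a..b} (\<lambda>_. K)"
      by (rule integral_le) (use iab Gb in \<open>auto simp: abs_le_iff\<close>)
    moreover have "integral {a..b} (\<lambda>_. - K) \<le> integral {a..b} G"
    proof (rule integral_le)
      fix l assume "l \<in> {a..b}"
      then show "- K \<le> G l" using Gb[of l] by linarith
    qed (use iab in auto)
    ultimately show ?thesis using eq ab(1) by (simp add: abs_le_iff algebra_simps)
  qed
  show ?thesis
  proof (cases "s \<le> t")
    case True then show ?thesis using one[OF True s t] by simp
  next
    case False then show ?thesis using one[of t s] s t by (simp add: abs_minus_commute)
  qed
qed



lemma core:
  fixes \<Omega> :: "'a::euclidean_space set"
  assumes cpt: "compact \<Omega>" and al: "\<alpha> \<ge> 0"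
    and M0: "0 < M0" and MM: "M0 < M" and K0: "0 \<le> K"
    and sol: "is_solution \<Omega> F f \<phi> \<tau>0 r A \<tau>"
    and AM: "\<forall>t\<in>{0..r}. supnorm \<Omega> (A t) \<le> M"
    and phibd: "\<forall>s\<le>0. \<forall>y\<in>\<Omega>. \<bar>exp (- \<alpha> * \<bar>s\<bar>) * \<phi> s y\<bar> \<le> M0"
    and philip: "\<forall>s\<le>0. \<forall>s'\<le>0. \<forall>y\<in>\<Omega>. \<bar>exp (- \<alpha> * \<bar>s\<bar>) * \<phi> s y - exp (- \<alpha> * \<bar>s'\<bar>) * \<phi> s' y\<bar> \<le> M0 * \<bar>s - s'\<bar>"
    and Alip: "\<And>s t x. s \<in> {0..r} \<Longrightarrow> t \<in> {0..r} \<Longrightarrow> x \<in> \<Omega> \<Longrightarrow> \<bar>A t x - A s x\<bar> \<le> K * \<bar>t - s\<bar>"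
    and t: "t \<in> {0..r}"
  shows "in_Lip \<Omega> \<alpha> (\<lambda>\<theta>. A (t + \<theta>)) \<and> Lip_norm \<Omega> \<alpha> (\<lambda>\<theta>. A (t + \<theta>)) \<le> M + (M0 + \<alpha> * M + K)"
proof -
  define Lc where "Lc = M0 + \<alpha> * M + K"
  have Lc0: "M0 \<le> Lc" "0 \<le> Lc" using Lc_def al MM M0 K0 by auto
  have csA: "cont_sup \<Omega> {..r} A" and Aphi: "\<forall>\<theta>\<le>0. \<forall>x\<in>\<Omega>. A \<theta> x = \<phi> \<theta> x"
    using sol unfolding is_solution_def by blast+
  have Ac: "continuous_on \<Omega> (A s)" if "s \<le> r" for s
    using csA that unfolding cont_sup_def cfun_def by auto
  have Abd: "\<bar>A s y\<bar> \<le> M" if "s \<in> {0..r}" "y \<in> \<Omega>" for s y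
  proof -
    have "supnorm \<Omega> (A s) \<le> M" using AM that by blast
    moreover have "s \<le> r" using that by auto
    ultimately show ?thesis using supnorm_ge[OF cpt Ac[of s] that(2)] by linarith
  qed
  define \<psi> where "\<psi> = (\<lambda>\<theta>. A (t + \<theta>))"
  have wtp: "wt \<alpha> \<psi> \<theta> y = exp (- \<alpha> * \<bar>\<theta>\<bar>) * A (t + \<theta>) y" for \<theta> y
    unfolding wt_def \<psi>_def by simp
  have t0: "0 \<le> t" "t \<le> r" using t by auto
  have e1: "exp (- \<alpha> * \<bar>\<theta>\<bar>) = exp (- \<alpha> * t) * exp (- \<alpha> * \<bar>t + \<theta>\<bar>)" if "t + \<theta> \<le> 0" for \<theta>
  proof -
    have "- \<alpha> * \<bar>\<theta>\<bar> = - \<alpha> * t + - \<alpha> * \<bar>t + \<theta>\<bar>" using that t0 by (simp add: algebra_simps)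
    then show ?thesis by (simp add: exp_add[symmetric])
  qed
  have e2: "exp (- \<alpha> * \<bar>\<theta>\<bar>) = exp (\<alpha> * \<theta>)" if "\<theta> \<le> 0" for \<theta>
    using that by simp
  have et: "exp (- \<alpha> * t) \<le> 1" using al t0 by simp
  have wb: "\<bar>wt \<alpha> \<psi> \<theta> y\<bar> \<le> M" if "\<theta> \<le> 0" "y \<in> \<Omega>" for \<theta> y
  proof (cases "0 \<le> t + \<theta>")
    case True
    have "exp (- \<alpha> * \<bar>\<theta>\<bar>) \<le> 1" using al by simp
    moreover have "\<bar>A (t + \<theta>) y\<bar> \<le> M" using Abd[of "t + \<theta>" y] True that t0 by auto
    ultimately have "exp (- \<alpha> * \<bar>\<theta>\<bar>) * \<bar>A (t + \<theta>) y\<bar> \<le> 1 * M"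
      by (intro mult_mono) auto
    then show ?thesis by (simp add: wtp abs_mult)
  next
    case False
    then have le: "t + \<theta> \<le> 0" by simp
    have eA: "A (t + \<theta>) y = \<phi> (t + \<theta>) y" using Aphi le that by blast
    have eqw: "wt \<alpha> \<psi> \<theta> y = exp (- \<alpha> * t) * (exp (- \<alpha> * \<bar>t + \<theta>\<bar>) * \<phi> (t + \<theta>) y)"
      unfolding wtp eA e1[OF le] by (simp only: mult.assoc)
    have Xb: "\<bar>exp (- \<alpha> * \<bar>t + \<theta>\<bar>) * \<phi> (t + \<theta>) y\<bar> \<le> M0" using phibd le that by blast
    have "\<bar>wt \<alpha> \<psi> \<theta> y\<bar> = exp (- \<alpha> * t) * \<bar>exp (- \<alpha> * \<bar>t + \<theta>\<bar>) * \<phi> (t + \<theta>) y\<bar>"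
      unfolding eqw abs_mult by simp
    also have "\<dots> \<le> 1 * M0" using et Xb by (intro mult_mono) auto
    finally have "\<bar>wt \<alpha> \<psi> \<theta> y\<bar> \<le> 1 * M0" .
    then show ?thesis using MM by simp
  qed
  have wl: "\<bar>wt \<alpha> \<psi> \<theta> y - wt \<alpha> \<psi> \<theta>' y\<bar> \<le> Lc * \<bar>\<theta> - \<theta>'\<bar>"
    if th: "\<theta> \<le> 0" "\<theta>' \<le> 0" and y: "y \<in> \<Omega>" for \<theta> \<theta>' y
  proof (rule lip_glue[where c = "- t" and h = "\<lambda>\<theta>. wt \<alpha> \<psi> \<theta> y"])
    show "- t \<le> 0" using t0 by simp
    show "\<theta> \<le> 0" "\<theta>' \<le> 0" using th by auto
  next
    fix a b :: real assume ab: "a \<le> - t" "b \<le> - t"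
    have lea: "t + a \<le> 0" using ab by simp
    have eAa: "A (t + a) y = \<phi> (t + a) y" using Aphi lea y by blast
    have ea: "wt \<alpha> \<psi> a y = exp (- \<alpha> * t) * (exp (- \<alpha> * \<bar>t + a\<bar>) * \<phi> (t + a) y)"
      unfolding wtp eAa e1[OF lea] by (simp only: mult.assoc)
    have leb: "t + b \<le> 0" using ab by simp
    have eAb: "A (t + b) y = \<phi> (t + b) y" using Aphi leb y by blast
    have eb: "wt \<alpha> \<psi> b y = exp (- \<alpha> * t) * (exp (- \<alpha> * \<bar>t + b\<bar>) * \<phi> (t + b) y)"
      unfolding wtp eAb e1[OF leb] by (simp only: mult.assoc)
    have "\<bar>exp (- \<alpha> * \<bar>t + a\<bar>) * \<phi> (t + a) y - exp (- \<alpha> * \<bar>t + b\<bar>) * \<phi> (t + b) y\<bar>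
          \<le> M0 * \<bar>(t + a) - (t + b)\<bar>" by (rule philip[rule_format, OF lea leb y])
    then have h: "\<bar>exp (- \<alpha> * \<bar>t + a\<bar>) * \<phi> (t + a) y - exp (- \<alpha> * \<bar>t + b\<bar>) * \<phi> (t + b) y\<bar>
          \<le> Lc * \<bar>a - b\<bar>" using Lc0 by (smt (verit) abs_ge_zero mult_right_mono)
    have "\<bar>wt \<alpha> \<psi> a y - wt \<alpha> \<psi> b y\<bar> = exp (- \<alpha> * t) *
           \<bar>exp (- \<alpha> * \<bar>t + a\<bar>) * \<phi> (t + a) y - exp (- \<alpha> * \<bar>t + b\<bar>) * \<phi> (t + b) y\<bar>"
      unfolding ea eb by (simp add: abs_mult right_diff_distrib[symmetric])
    also have "\<dots> \<le> 1 * (Lc * \<bar>a - b\<bar>)" using h et by (intro mult_mono) auto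
    finally show "\<bar>wt \<alpha> \<psi> a y - wt \<alpha> \<psi> b y\<bar> \<le> Lc * \<bar>a - b\<bar>" by simp
  next
    fix a b :: real assume ab: "- t \<le> a" "a \<le> 0" "- t \<le> b" "b \<le> 0"
    have ea: "wt \<alpha> \<psi> a y = exp (\<alpha> * a) * A (t + a) y" using wtp e2 ab by simp
    have eb: "wt \<alpha> \<psi> b y = exp (\<alpha> * b) * A (t + b) y" using wtp e2 ab by simp
    have ar: "t + a \<in> {0..r}" "t + b \<in> {0..r}" using ab t0 by auto
    have d: "exp (\<alpha> * a) * A (t + a) y - exp (\<alpha> * b) * A (t + b) y
      = (exp (\<alpha> * a) - exp (\<alpha> * b)) * A (t + a) y + exp (\<alpha> * b) * (A (t + a) y - A (t + b) y)"
      by (simp add: algebra_simps)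
    have x1: "\<bar>exp (\<alpha> * a) - exp (\<alpha> * b)\<bar> \<le> \<alpha> * \<bar>a - b\<bar>"
    proof -
      have "\<bar>exp (\<alpha> * a) - exp (\<alpha> * b)\<bar> \<le> \<bar>\<alpha> * a - \<alpha> * b\<bar>"
        by (rule exp_lip) (use al ab in \<open>auto simp: mult_nonneg_nonpos\<close>)
      also have "\<dots> = \<alpha> * \<bar>a - b\<bar>" using al by (simp add: abs_mult right_diff_distrib[symmetric])
      finally show ?thesis .
    qed
    have x2: "\<bar>(exp (\<alpha> * a) - exp (\<alpha> * b)) * A (t + a) y\<bar> \<le> \<alpha> * \<bar>a - b\<bar> * M"
      unfolding abs_mult using x1 Abd[OF ar(1) y] by (intro mult_mono) auto
    have x3: "\<bar>A (t + a) y - A (t + b) y\<bar> \<le> K * \<bar>a - b\<bar>"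
      using Alip[OF ar(2) ar(1) y] by simp
    have eb1: "exp (\<alpha> * b) \<le> 1" using al ab by (simp add: mult_nonneg_nonpos)
    have x4: "\<bar>exp (\<alpha> * b) * (A (t + a) y - A (t + b) y)\<bar> \<le> 1 * (K * \<bar>a - b\<bar>)"
      unfolding abs_mult using x3 eb1 by (intro mult_mono) auto
    have "\<bar>wt \<alpha> \<psi> a y - wt \<alpha> \<psi> b y\<bar> \<le> \<alpha> * \<bar>a - b\<bar> * M + 1 * (K * \<bar>a - b\<bar>)"
      unfolding ea eb d using x2 x4 by linarith
    also have "\<dots> \<le> Lc * \<bar>a - b\<bar>" unfolding Lc_def using M0
      by (simp add: algebra_simps)
    finally show "\<bar>wt \<alpha> \<psi> a y - wt \<alpha> \<psi> b y\<bar> \<le> Lc * \<bar>a - b\<bar>" .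
  qed
  have cs: "cont_sup \<Omega> {..0} \<psi>"
    unfolding cont_sup_def
  proof (intro conjI ballI allI impI)
    fix \<theta> :: real assume "\<theta> \<in> {..0}"
    then show "\<psi> \<theta> \<in> cfun \<Omega>" unfolding \<psi>_def cfun_def using Ac t0 by auto
  next
    fix \<theta> :: real and e :: real assume th: "\<theta> \<in> {..0}" and e: "0 < e"
    have "t + \<theta> \<in> {..r}" using th t0 by auto
    then obtain d where d: "d > 0" "\<forall>s\<in>{..r}. \<bar>s - (t + \<theta>)\<bar> < d \<longrightarrow> supnorm \<Omega> (\<lambda>x. A s x - A (t + \<theta>) x) < e"
      using csA e unfolding cont_sup_def by blast
    show "\<exists>d>0. \<forall>s\<in>{..0}. \<bar>s - \<theta>\<bar> < d \<longrightarrow> supnorm \<Omega> (\<lambda>x. \<psi> s x - \<psi> \<theta> x) < e"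
    proof (intro exI[of _ d] conjI ballI impI)
      show "0 < d" using d by simp
      fix s :: real assume s: "s \<in> {..0}" "\<bar>s - \<theta>\<bar> < d"
      then have "t + s \<in> {..r}" "\<bar>(t + s) - (t + \<theta>)\<bar> < d" using t0 by auto
      then show "supnorm \<Omega> (\<lambda>x. \<psi> s x - \<psi> \<theta> x) < e" using d unfolding \<psi>_def by blast
    qed
  qed
  have sb: "supnorm \<Omega> (wt \<alpha> \<psi> \<theta>) \<le> M" if "\<theta> \<le> 0" for \<theta>
    by (rule supnorm_le) (use wb that MM M0 in auto)
  have sl: "supnorm \<Omega> (\<lambda>x. wt \<alpha> \<psi> \<theta> x - wt \<alpha> \<psi> \<theta>' x) \<le> Lc * \<bar>\<theta> - \<theta>'\<bar>"
    if "\<theta> \<le> 0" "\<theta>' \<le> 0" for \<theta> \<theta>'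
    by (rule supnorm_le) (use wl that Lc0 in auto)
  have inL: "in_Lip \<Omega> \<alpha> \<psi>" unfolding in_Lip_def using cs sb sl by blast
  define P where "P = {p::real\<times>real. fst p \<le> 0 \<and> snd p \<le> 0 \<and> fst p \<noteq> snd p}"
  have S1: "(SUP \<theta>\<in>{..0}. supnorm \<Omega> (wt \<alpha> \<psi> \<theta>)) \<le> M"
    by (rule cSUP_least) (use sb in auto)
  have S2: "(SUP p\<in>P. supnorm \<Omega> (\<lambda>x. wt \<alpha> \<psi> (fst p) x - wt \<alpha> \<psi> (snd p) x) / \<bar>fst p - snd p\<bar>) \<le> Lc"
  proof (rule cSUP_least)
    have "(0::real, -1::real) \<in> P" unfolding P_def by simp
    then show "P \<noteq> {}" by blast
  next
    fix p assume "p \<in> P"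
    then have pp: "fst p \<le> 0" "snd p \<le> 0" "\<bar>fst p - snd p\<bar> > 0" unfolding P_def by auto
    show "supnorm \<Omega> (\<lambda>x. wt \<alpha> \<psi> (fst p) x - wt \<alpha> \<psi> (snd p) x) / \<bar>fst p - snd p\<bar> \<le> Lc"
      using sl[OF pp(1) pp(2)] pp(3) by (simp add: divide_le_eq)
  qed
  have "Lip_norm \<Omega> \<alpha> \<psi> \<le> M + Lc" unfolding Lip_norm_def using S1 S2 unfolding P_def by linarith
  then show ?thesis using inL unfolding \<psi>_def Lc_def by simp
qed



theorem corollary4p5:
  fixes \<Omega> :: "'a::euclidean_space set"
    and F :: "('a \<Rightarrow> real) \<Rightarrow> ('a \<Rightarrow> real) \<Rightarrow> ('a \<times> 'a \<Rightarrow> real) \<Rightarrow> ('a \<Rightarrow> real)"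
    and f :: "('a \<Rightarrow> real) \<Rightarrow> ('a \<Rightarrow> real)"
    and \<alpha> Mf M0 M r :: real
  assumes "compact \<Omega>"
    and "\<alpha> \<ge> 0"
    and "F_ok \<Omega> F"
    and "f_ok \<Omega> f Mf"
    and "0 < M0" and "M0 < M" and "0 < r"
  shows "\<exists>Mhat > M. \<forall>\<phi> \<tau>0 A \<tau>.
           in_Lip \<Omega> \<alpha> \<phi> \<longrightarrow>
           continuous_on \<Omega> \<tau>0 \<longrightarrow> (\<forall>x\<in>\<Omega>. 0 \<le> \<tau>0 x) \<longrightarrow>
           Lip_norm \<Omega> \<alpha> \<phi> + supnorm \<Omega> \<tau>0 \<le> M0 \<longrightarrow>
           is_solution \<Omega> F f \<phi> \<tau>0 r A \<tau> \<longrightarrow>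
           (\<forall>t\<in>{0..r}. supnorm \<Omega> (A t) \<le> M) \<longrightarrow>
           (\<forall>t\<in>{0..r}. in_Lip \<Omega> \<alpha> (\<lambda>\<theta>. A (t + \<theta>)) \<and>
                        Lip_norm \<Omega> \<alpha> (\<lambda>\<theta>. A (t + \<theta>)) \<le> Mhat)"
proof -
  note cpt = assms(1) and al = assms(2) and fok = assms(4)
    and M0 = assms(5) and MM = assms(6) and r = assms(7)
  define B where "B = M + r + M0 + M0 * exp (\<alpha> * (r + M0))"
  have Fc: "\<forall>u\<in>cfun \<Omega>. \<forall>v\<in>cfun \<Omega>. \<forall>w\<in>cfun (\<Omega> \<times> \<Omega>). F u v w \<in> cfun \<Omega>"
    using assms(3) unfolding F_ok_def by blast
  obtain LL where LB: "\<forall>u\<in>cfun \<Omega>. \<forall>v\<in>cfun \<Omega>. \<forall>w\<in>cfun (\<Omega> \<times> \<Omega>).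
                \<forall>u'\<in>cfun \<Omega>. \<forall>v'\<in>cfun \<Omega>. \<forall>w'\<in>cfun (\<Omega> \<times> \<Omega>).
        supnorm \<Omega> u \<le> B \<longrightarrow> supnorm \<Omega> v \<le> B \<longrightarrow> supnorm (\<Omega> \<times> \<Omega>) w \<le> B \<longrightarrow>
        supnorm \<Omega> u' \<le> B \<longrightarrow> supnorm \<Omega> v' \<le> B \<longrightarrow> supnorm (\<Omega> \<times> \<Omega>) w' \<le> B \<longrightarrow>
        supnorm \<Omega> (\<lambda>x. F u v w x - F u' v' w' x)
          \<le> LL * (supnorm \<Omega> (\<lambda>x. u x - u' x) + supnorm \<Omega> (\<lambda>x. v x - v' x)
                 + supnorm (\<Omega> \<times> \<Omega>) (\<lambda>p. w p - w' p))"
    using assms(3) unfolding F_ok_def by blast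
  define C0 where "C0 = supnorm \<Omega> (F (\<lambda>_. 0) (\<lambda>_. 0) (\<lambda>_. 0))"
  define K where "K = C0 + \<bar>LL\<bar> * (3 * B)"
  have "(\<lambda>_. 0::real) \<in> cfun \<Omega>" "(\<lambda>_. 0::real) \<in> cfun (\<Omega> \<times> \<Omega>)" unfolding cfun_def by auto
  then have "continuous_on \<Omega> (F (\<lambda>_. 0) (\<lambda>_. 0) (\<lambda>_. 0))" using Fc unfolding cfun_def by blast
  then have C00: "0 \<le> C0" unfolding C0_def by (rule supnorm_nonneg[OF cpt])
  have B0: "0 \<le> B" unfolding B_def using M0 MM r by (simp add: add_nonneg_nonneg)
  have K0: "0 \<le> K" unfolding K_def using C00 B0 by simp
  define Mhat where "Mhat = M + (M0 + \<alpha> * M + K) + 1"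
  have "0 \<le> \<alpha> * M" using al M0 MM by simp
  then have gt: "Mhat > M" unfolding Mhat_def using M0 MM al K0 by linarith
  show ?thesis
  proof (intro exI[of _ Mhat] conjI allI impI ballI)
    show "Mhat > M" by (rule gt)
  next
    fix \<phi> \<tau>0 A \<tau> t
    assume L: "in_Lip \<Omega> \<alpha> \<phi>" and tc: "continuous_on \<Omega> \<tau>0" and t0: "\<forall>x\<in>\<Omega>. 0 \<le> \<tau>0 x"
      and N: "Lip_norm \<Omega> \<alpha> \<phi> + supnorm \<Omega> \<tau>0 \<le> M0"
      and sol: "is_solution \<Omega> F f \<phi> \<tau>0 r A \<tau>"
      and AM: "\<forall>t\<in>{0..r}. supnorm \<Omega> (A t) \<le> M" and t: "t \<in> {0..r}"
    note pf = phi_facts[OF cpt L tc N]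
    have taub: "\<forall>t\<in>{0..r}. \<forall>x\<in>\<Omega>. \<tau> t x \<le> t + \<tau>0 x"
      by (rule tau_bound_all[OF cpt fok L t0 sol AM r])
    have Fbd: "\<forall>l\<in>{0..r}. \<forall>x\<in>\<Omega>. \<bar>F (A l) (\<tau> l) (\<lambda>p. A (l - \<tau> l (fst p)) (snd p)) x\<bar> \<le> K"
      unfolding K_def C0_def
      using F_bound[OF cpt al Fc LB B_def M0 MM r sol AM pf(1) taub pf(3)] by blast
    have Alip: "\<And>s t x. s \<in> {0..r} \<Longrightarrow> t \<in> {0..r} \<Longrightarrow> x \<in> \<Omega> \<Longrightarrow> \<bar>A t x - A s x\<bar> \<le> K * \<bar>t - s\<bar>"
      using A_lip[OF sol Fbd] by blast
    have "in_Lip \<Omega> \<alpha> (\<lambda>\<theta>. A (t + \<theta>)) \<and> Lip_norm \<Omega> \<alpha> (\<lambda>\<theta>. A (t + \<theta>)) \<le> M + (M0 + \<alpha> * M + K)"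
      by (rule core[OF cpt al M0 MM K0 sol AM pf(1) pf(2) Alip t])
    then show "in_Lip \<Omega> \<alpha> (\<lambda>\<theta>. A (t + \<theta>))" "Lip_norm \<Omega> \<alpha> (\<lambda>\<theta>. A (t + \<theta>)) \<le> Mhat"
      unfolding Mhat_def by auto
  qed
qed

end
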